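(* Let $V=\{1,\ldots,p\}$ and let $\mathbf{X}_V$ be a random vector with positive definite covariance matrix $\Sigma=\{\sigma_{uv}\}_{u,v\in V}$ and concentration matrix $K=\Sigma^{-1}=\{\kappa_{uv}\}_{u,v\in V}$. Suppose $K$ implies the undirected graph $\mathcal{G}=(V,\mathcal{E})$. Then for every edge $\{x,y\}\in\mathcal{E}$, $$\omega(\langle x,y\rangle,\Sigma)=\frac{\sigma_{xy\cdot V\setminus\{x,y\}}}{1-\rho^{2}_{\{x,y\}\mid V\setminus\{x,y\}}},$$ where $\sigma_{xy\cdot V\setminus\{x,y\}}$ is the $(x,y)$ entry of the partial covariance matrix $\Sigma_{\{x,y\}\{x,y\}\cdot V\setminus\{x,y\}}$ and $\rho_{\{x,y\}\mid V\setminus\{x,y\}}$ is the vector correlation coefficient between $\mathbf{X}_{\{x,y\}}$ and $\mathbf{X}_{V\setminus\{x,y\}}$.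
   Context: For $A,B\subseteq V$ disjoint, $\Sigma_{AB}$ denotes the submatrix of $\Sigma$ with rows $A$, columns $B$; $\Sigma_{AA}^{-1}$ means $(\Sigma_{AA})^{-1}$; the partial covariance matrix is $\Sigma_{AA\cdot B}=\Sigma_{AA}-\Sigma_{AB}\Sigma_{BB}^{-1}\Sigma_{BA}$ (equal to $\Sigma_{AA}$ if $B=\emptyset$). $K$ implies an undirected graph $\mathcal{G}=(V,\mathcal{E})$ (no self-loops) if every nonzero off-diagonal entry $\kappa_{uv}$ corresponds to an edge $\{u,v\}\in\mathcal{E}$. A path between $x$ and $y$ is a sequence $\pi=\langle x=v_1,\ldots,v_k=y\rangle$ of $k\ge2$ distinct vertices with consecutive vertices adjacent; $V(\pi)$ and $\mathcal{E}(\pi)$ denote its vertex and edge sets. For a positive definite matrix $\Gamma$ indexed by $V$ and a path $\pi$ with $P=V(\pi)$, the path weight is $\omega(\pi,\Gamma)=(-1)^{|P|+1}\,|\Gamma_{PP}|\prod_{\{u,v\}\in\mathcal{E}(\pi)}\{\Gamma^{-1}\}_{uv}$, where $|\cdot|$ of a matrix is the determinant. For disjoint $A,B$, the vector alienation coefficient is $\lambda_{A\mid B}=|\Sigma_{A\cup B\,A\cup B}|/(|\Sigma_{AA}|\,|\Sigma_{BB}|)$ and the vector correlation coefficient is $\rho_{A\mid B}=\sqrt{1-\lambda_{A\mid B}}$, with the convention $\rho_{A\mid B}=0$ if $A=\emptyset$ or $B=\emptyset$. *)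

theory Defs
  imports "HOL-Combinatorics.Permutations" Complex_Main
begin

text \<open>Matrices are represented as functions of type nat => nat => real, considered
  on an explicit finite index set.  For a set S, the submatrix M_SS is M restricted to S.\<close>

definition det_on :: "nat set \<Rightarrow> (nat \<Rightarrow> nat \<Rightarrow> real) \<Rightarrow> real" where
  "det_on S M = (\<Sum>\<sigma> | \<sigma> permutes S. of_int (sign \<sigma>) * (\<Prod>i\<in>S. M i (\<sigma> i)))"

definition inv_on :: "nat set \<Rightarrow> (nat \<Rightarrow> nat \<Rightarrow> real) \<Rightarrow> (nat \<Rightarrow> nat \<Rightarrow> real)" where
  "inv_on S M = (THE B. (\<forall>i\<in>S. \<forall>j\<in>S. (\<Sum>k\<in>S. M i k * B k j) = (if i = j then 1 else 0))
                      \<and> (\<forall>i j. i \<notin> S \<or> j \<notin> S \<longrightarrow> B i j = 0))"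

definition pos_def_on :: "nat set \<Rightarrow> (nat \<Rightarrow> nat \<Rightarrow> real) \<Rightarrow> bool" where
  "pos_def_on V M \<longleftrightarrow> (\<forall>i\<in>V. \<forall>j\<in>V. M i j = M j i) \<and>
     (\<forall>z :: nat \<Rightarrow> real. (\<exists>i\<in>V. z i \<noteq> 0) \<longrightarrow> (\<Sum>i\<in>V. \<Sum>j\<in>V. z i * M i j * z j) > 0)"

text \<open>Partial covariance matrix Sigma_{AA.B} (its entries for indices in A).\<close>
definition partial_cov :: "(nat \<Rightarrow> nat \<Rightarrow> real) \<Rightarrow> nat set \<Rightarrow> nat \<Rightarrow> nat \<Rightarrow> real" where
  "partial_cov M B i j = M i j - (\<Sum>k\<in>B. \<Sum>l\<in>B. M i k * inv_on B M k l * M l j)"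

definition alienation :: "(nat \<Rightarrow> nat \<Rightarrow> real) \<Rightarrow> nat set \<Rightarrow> nat set \<Rightarrow> real" where
  "alienation M A B = det_on (A \<union> B) M / (det_on A M * det_on B M)"

definition vec_corr :: "(nat \<Rightarrow> nat \<Rightarrow> real) \<Rightarrow> nat set \<Rightarrow> nat set \<Rightarrow> real" where
  "vec_corr M A B = (if A = {} \<or> B = {} then 0 else sqrt (1 - alienation M A B))"

text \<open>Path weight omega(pi, Gamma), Gamma indexed by V; the edges of the path are the
  consecutive pairs of the (distinct) vertex list, and (Gamma^{-1})_{uv} is taken in the
  full matrix Gamma_VV.\<close>
definition path_weight :: "nat set \<Rightarrow> nat list \<Rightarrow> (nat \<Rightarrow> nat \<Rightarrow> real) \<Rightarrow> real" where
  "path_weight V \<pi> \<Gamma> = (-1) ^ (card (set \<pi>) + 1) * det_on (set \<pi>) \<Gamma> *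
      prod_list (map (\<lambda>(u, v). inv_on V \<Gamma> u v) (zip \<pi> (tl \<pi>)))"

end

theory Submission
  imports Defs "Jordan_Normal_Form.Determinant"
begin


definition matJ :: "(nat \<Rightarrow> nat) \<Rightarrow> nat \<Rightarrow> (nat \<Rightarrow> nat \<Rightarrow> real) \<Rightarrow> real mat" where
  "matJ f n M = mat n n (\<lambda>(i,j). M (f i) (f j))"

lemma det_on_transfer:
  assumes f: "bij_betw f {0..<n} S"
  shows "det_on S M = det (matJ f n M)"
proof -
  have finS: "finite S" using f bij_betw_finite by blast
  let ?g = "inv_into {0..<n} f"
  let ?h = "\<lambda>\<pi> x. if x \<in> S then f (\<pi> (?g x)) else x"
  have bh: "bij_betw ?h {\<pi>. \<pi> permutes {0..<n}} {\<pi>. \<pi> permutes S}"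
    by (rule bij_betw_permutations[OF f])
  have "det_on S M = (\<Sum>\<pi> | \<pi> permutes {0..<n}. of_int (sign (?h \<pi>)) * (\<Prod>i\<in>S. M i (?h \<pi> i)))"
    unfolding det_on_def by (rule sum.reindex_bij_betw[OF bh, symmetric])
  also have "\<dots> = (\<Sum>\<pi> | \<pi> permutes {0..<n}. of_int (sign \<pi>) * (\<Prod>i = 0..<n. M (f i) (f (\<pi> i))))"
  proof (rule sum.cong[OF refl])
    fix \<pi> assume "\<pi> \<in> {\<pi>. \<pi> permutes {0..<n}}"
    hence p: "\<pi> permutes {0..<n}" by simp
    have s: "sign (?h \<pi>) = sign \<pi>"
    proof -
      interpret permutes_bij_finite \<pi> "{0..<n}" S f ?g "?h \<pi>"
        by unfold_locales (use p f in \<open>auto simp: bij_betw_inv_into_left\<close>)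
      show ?thesis using sign_p' by simp
    qed
    have pr: "(\<Prod>i\<in>S. M i (?h \<pi> i)) = (\<Prod>i = 0..<n. M (f i) (?h \<pi> (f i)))"
      by (rule prod.reindex_bij_betw[OF f, symmetric])
    also have "\<dots> = (\<Prod>i = 0..<n. M (f i) (f (\<pi> i)))"
      using f by (intro prod.cong refl) (auto simp: bij_betw_inv_into_left bij_betwE)
    finally show "of_int (sign (?h \<pi>)) * (\<Prod>i\<in>S. M i (?h \<pi> i)) = of_int (sign \<pi>) * (\<Prod>i = 0..<n. M (f i) (f (\<pi> i)))"
      using s by simp
  qed
  also have "\<dots> = det (matJ f n M)"
    unfolding det_def matJ_def
    by (auto intro!: sum.cong prod.cong simp: permutes_in_image)
  finally show ?thesis .
qed

lemma det_on_cong: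
  assumes "\<And>i j. i \<in> S \<Longrightarrow> j \<in> S \<Longrightarrow> M i j = N i j"
  shows "det_on S M = det_on S N"
  unfolding det_on_def
  by (intro sum.cong refl arg_cong2[where f="(*)"] prod.cong) (auto simp: assms permutes_in_image)

lemma det_on_mult:
  assumes "finite S"
  shows "det_on S (\<lambda>i j. \<Sum>k\<in>S. M i k * N k j) = det_on S M * det_on S N"
proof -
  obtain f where f: "bij_betw f {0..<card S} S" using ex_bij_betw_nat_finite[OF assms] by blast
  let ?n = "card S"
  have "matJ f ?n (\<lambda>i j. \<Sum>k\<in>S. M i k * N k j) = matJ f ?n M * matJ f ?n N"
  proof (rule eq_matI)
    fix i j assume ij: "i < dim_row (matJ f ?n M * matJ f ?n N)" "j < dim_col (matJ f ?n M * matJ f ?n N)"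
    hence i: "i < ?n" and j: "j < ?n" by (auto simp: matJ_def)
    have "(\<Sum>k\<in>S. M (f i) k * N k (f j)) = (\<Sum>l = 0..<?n. M (f i) (f l) * N (f l) (f j))"
      by (rule sum.reindex_bij_betw[OF f, symmetric])
    thus "matJ f ?n (\<lambda>i j. \<Sum>k\<in>S. M i k * N k j) $$ (i, j) = (matJ f ?n M * matJ f ?n N) $$ (i, j)"
      using i j by (simp add: matJ_def scalar_prod_def)
  qed (auto simp: matJ_def)
  thus ?thesis
    using det_mult[of "matJ f ?n M" ?n "matJ f ?n N"]
    by (simp add: det_on_transfer[OF f] matJ_def)
qed

lemma det_on_id:
  assumes "finite S"
  shows "det_on S (\<lambda>i j. if i = j then 1 else 0) = 1"
proof -
  obtain f where f: "bij_betw f {0..<card S} S" using ex_bij_betw_nat_finite[OF assms] by blast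
  have inj: "inj_on f {0..<card S}" using f bij_betw_def by blast
  have "matJ f (card S) (\<lambda>i j. if i = j then 1 else 0) = 1\<^sub>m (card S)"
    by (rule eq_matI) (auto simp: matJ_def inj_on_eq_iff[OF inj])
  thus ?thesis by (simp add: det_on_transfer[OF f])
qed

lemma det_on_block:
  assumes fin: "finite S" and AB: "A \<union> B = S" "A \<inter> B = {}"
    and z: "\<And>a b. a \<in> A \<Longrightarrow> b \<in> B \<Longrightarrow> M a b = 0"
  shows "det_on S M = det_on A M * det_on B M"
proof -
  have finA: "finite A" and finB: "finite B" using fin AB by auto
  obtain fA where fA: "bij_betw fA {0..<card A} A" using ex_bij_betw_nat_finite[OF finA] by blast
  obtain fB where fB: "bij_betw fB {0..<card B} B" using ex_bij_betw_nat_finite[OF finB] by blast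
  define nA where "nA = card A"
  define nB where "nB = card B"
  define f where "f = (\<lambda>k. if k < nA then fA k else fB (k - nA))"
  have b1: "bij_betw f {0..<nA} A"
    using fA unfolding nA_def by (rule bij_betw_cong[THEN iffD1, rotated]) (auto simp: f_def nA_def)
  have sh: "bij_betw (\<lambda>k. k - nA) {nA..<nA+nB} {0..<nB}"
    by (rule bij_betw_byWitness[where f'="\<lambda>k. k + nA"]) auto
  have b2': "bij_betw (fB \<circ> (\<lambda>k. k - nA)) {nA..<nA+nB} B"
    using sh fB unfolding nB_def by (rule bij_betw_trans)
  have b2: "bij_betw f {nA..<nA+nB} B"
    using b2' by (rule bij_betw_cong[THEN iffD1, rotated]) (auto simp: f_def)
  have "bij_betw f ({0..<nA} \<union> {nA..<nA+nB}) (A \<union> B)"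
    by (rule bij_betw_combine[OF b1 b2 AB(2)])
  moreover have "{0..<nA} \<union> {nA..<nA+nB} = {0..<nA+nB}" by auto
  ultimately have f: "bij_betw f {0..<nA+nB} S" using AB by simp
  have "matJ f (nA+nB) M = four_block_mat (matJ fA nA M) (0\<^sub>m nA nB)
          (mat nB nA (\<lambda>(i,j). M (fB i) (fA j))) (matJ fB nB M)"
  proof (rule eq_matI)
    fix i j assume "i < dim_row (four_block_mat (matJ fA nA M) (0\<^sub>m nA nB)
          (mat nB nA (\<lambda>(i,j). M (fB i) (fA j))) (matJ fB nB M))"
      "j < dim_col (four_block_mat (matJ fA nA M) (0\<^sub>m nA nB)
          (mat nB nA (\<lambda>(i,j). M (fB i) (fA j))) (matJ fB nB M))"
    hence i: "i < nA + nB" and j: "j < nA + nB" by (auto simp: matJ_def four_block_mat_def Let_def)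
    have zz: "M (fA i) (fB (j - nA)) = 0" if "i < nA" "\<not> j < nA"
    proof (rule z)
      show "fA i \<in> A" using bij_betwE[OF fA] that unfolding nA_def by auto
      show "fB (j - nA) \<in> B" using bij_betwE[OF fB] that j unfolding nA_def nB_def by auto
    qed
    show "matJ f (nA + nB) M $$ (i, j) = four_block_mat (matJ fA nA M) (0\<^sub>m nA nB)
          (mat nB nA (\<lambda>(i,j). M (fB i) (fA j))) (matJ fB nB M) $$ (i, j)"
      using i j zz by (auto simp: matJ_def four_block_mat_def Let_def f_def)
  qed (auto simp: matJ_def four_block_mat_def Let_def)
  hence "det (matJ f (nA+nB) M) = det (matJ fA nA M) * det (matJ fB nB M)"
    by (simp add: det_four_block_mat_upper_right_zero[where n=nA and m=nB] matJ_def)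
  thus ?thesis
    using det_on_transfer[OF f] det_on_transfer[OF fA] det_on_transfer[OF fB]
    by (simp add: nA_def nB_def)
qed


lemma delta_l: "finite S \<Longrightarrow> i \<in> S \<Longrightarrow> (\<Sum>k\<in>S. (if i = k then 1 else 0) * (c k::real)) = c i"
proof -
  assume a: "finite S" "i \<in> S"
  have "(\<Sum>k\<in>S. (if i = k then 1 else 0) * c k) = (\<Sum>k\<in>S. if i = k then c k else 0)" by (rule sum.cong) auto
  thus ?thesis using a by simp
qed

lemma delta_r: "finite S \<Longrightarrow> j \<in> S \<Longrightarrow> (\<Sum>k\<in>S. (c k::real) * (if k = j then 1 else 0)) = c j"
proof -
  assume a: "finite S" "j \<in> S"
  have "(\<Sum>k\<in>S. c k * (if k = j then 1 else 0)) = (\<Sum>k\<in>S. if j = k then c k else 0)" by (rule sum.cong) auto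
  thus ?thesis using a by simp
qed

lemma inv_on_props:
  assumes fin: "finite S" and d: "det_on S M \<noteq> 0"
  shows "\<forall>i\<in>S. \<forall>j\<in>S. (\<Sum>k\<in>S. M i k * inv_on S M k j) = (if i = j then 1 else 0)"
    and "\<forall>i\<in>S. \<forall>j\<in>S. (\<Sum>k\<in>S. inv_on S M i k * M k j) = (if i = j then 1 else 0)"
    and "\<forall>i j. i \<notin> S \<or> j \<notin> S \<longrightarrow> inv_on S M i j = 0"
proof -
  obtain f where f: "bij_betw f {0..<card S} S" using ex_bij_betw_nat_finite[OF fin] by blast
  define n where "n = card S"
  note f = f[folded n_def]
  define A where "A = matJ f n M"
  have Ac: "A \<in> carrier_mat n n" by (simp add: A_def matJ_def)
  have dA: "det A \<noteq> 0" using d det_on_transfer[OF f] by (simp add: A_def)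
  from det_non_zero_imp_unit[OF Ac dA, of undefined]
  obtain B where Bc: "B \<in> carrier_mat n n" and BA: "B * A = 1\<^sub>m n" and AB: "A * B = 1\<^sub>m n"
    unfolding Units_def ring_mat_def by auto
  define g where "g = inv_into {0..<n} f"
  have gS: "g i < n" if "i \<in> S" for i
    using that f unfolding g_def by (meson atLeastLessThan_iff bij_betwE bij_betw_inv_into)
  have fg: "f (g i) = i" if "i \<in> S" for i
    using that f unfolding g_def by (simp add: bij_betw_inv_into_right)
  have gf: "g (f l) = l" if "l < n" for l
    using that f unfolding g_def by (simp add: bij_betw_inv_into_left)
  have fS: "f l \<in> S" if "l < n" for l using that f by (auto dest: bij_betwE)
  define B0 where "B0 = (\<lambda>i j. if i \<in> S \<and> j \<in> S then B $$ (g i, g j) else 0)"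
  have R: "(\<Sum>k\<in>S. M i k * B0 k j) = (if i = j then 1 else 0)" if ij: "i \<in> S" "j \<in> S" for i j
  proof -
    have "(\<Sum>k\<in>S. M i k * B0 k j) = (\<Sum>l = 0..<n. M i (f l) * B0 (f l) j)"
      by (rule sum.reindex_bij_betw[OF f, symmetric])
    also have "\<dots> = (\<Sum>l = 0..<n. A $$ (g i, l) * B $$ (l, g j))"
      using ij gS fg gf fS by (intro sum.cong refl) (auto simp: A_def matJ_def B0_def)
    also have "\<dots> = (A * B) $$ (g i, g j)"
      using ij gS Ac Bc by (simp add: scalar_prod_def)
    also have "\<dots> = (if i = j then 1 else 0)"
      using ij gS fg AB by (metis index_one_mat(1))
    finally show ?thesis .
  qed
  have L: "(\<Sum>k\<in>S. B0 i k * M k j) = (if i = j then 1 else 0)" if ij: "i \<in> S" "j \<in> S" for i j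
  proof -
    have "(\<Sum>k\<in>S. B0 i k * M k j) = (\<Sum>l = 0..<n. B0 i (f l) * M (f l) j)"
      by (rule sum.reindex_bij_betw[OF f, symmetric])
    also have "\<dots> = (\<Sum>l = 0..<n. B $$ (g i, l) * A $$ (l, g j))"
      using ij gS fg gf fS by (intro sum.cong refl) (auto simp: A_def matJ_def B0_def)
    also have "\<dots> = (B * A) $$ (g i, g j)"
      using ij gS Ac Bc by (simp add: scalar_prod_def)
    also have "\<dots> = (if i = j then 1 else 0)"
      using ij gS fg BA by (metis index_one_mat(1))
    finally show ?thesis .
  qed
  have Z: "\<forall>i j. i \<notin> S \<or> j \<notin> S \<longrightarrow> B0 i j = 0" by (auto simp: B0_def)
  have eq: "inv_on S M = B0"
    unfolding inv_on_def
  proof (rule the_equality)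
    show "(\<forall>i\<in>S. \<forall>j\<in>S. (\<Sum>k\<in>S. M i k * B0 k j) = (if i = j then 1 else 0)) \<and>
          (\<forall>i j. i \<notin> S \<or> j \<notin> S \<longrightarrow> B0 i j = 0)" using R Z by blast
  next
    fix B' assume B': "(\<forall>i\<in>S. \<forall>j\<in>S. (\<Sum>k\<in>S. M i k * B' k j) = (if i = j then 1 else 0)) \<and>
          (\<forall>i j. i \<notin> S \<or> j \<notin> S \<longrightarrow> B' i j = 0)"
    show "B' = B0"
    proof (intro ext)
      fix i j
      show "B' i j = B0 i j"
      proof (cases "i \<in> S \<and> j \<in> S")
        case True
        have "B0 i j = (\<Sum>l\<in>S. B0 i l * (if l = j then 1 else 0))"
          using True fin by (simp add: delta_r)
        also have "\<dots> = (\<Sum>l\<in>S. B0 i l * (\<Sum>k\<in>S. M l k * B' k j))"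
          using B' True by (intro sum.cong refl) auto
        also have "\<dots> = (\<Sum>l\<in>S. \<Sum>k\<in>S. B0 i l * M l k * B' k j)"
          by (simp add: sum_distrib_left mult.assoc)
        also have "\<dots> = (\<Sum>k\<in>S. \<Sum>l\<in>S. B0 i l * M l k * B' k j)"
          by (rule sum.swap)
        also have "\<dots> = (\<Sum>k\<in>S. (\<Sum>l\<in>S. B0 i l * M l k) * B' k j)"
          by (simp add: sum_distrib_right)
        also have "\<dots> = (\<Sum>k\<in>S. (if i = k then 1 else 0) * B' k j)"
          using L True by (intro sum.cong refl) auto
        also have "\<dots> = B' i j"
          using True fin by (simp add: delta_l)
        finally show ?thesis by simp
      next
        case False thus ?thesis using B' Z by auto
      qed
    qed
  qed
  show "\<forall>i\<in>S. \<forall>j\<in>S. (\<Sum>k\<in>S. M i k * inv_on S M k j) = (if i = j then 1 else 0)"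
    using R eq by simp
  show "\<forall>i\<in>S. \<forall>j\<in>S. (\<Sum>k\<in>S. inv_on S M i k * M k j) = (if i = j then 1 else 0)"
    using L eq by simp
  show "\<forall>i j. i \<notin> S \<or> j \<notin> S \<longrightarrow> inv_on S M i j = 0" using Z eq by simp
qed



lemma schur:
  assumes fin: "finite S" and AB: "A \<union> B = S" "A \<inter> B = {}" and d: "det_on B M \<noteq> 0"
  shows "det_on S M = det_on B M * det_on A (partial_cov M B)"
proof -
  have finA: "finite A" and finB: "finite B" using fin AB by auto
  define Sb where "Sb = inv_on B M"
  note Sp = inv_on_props[OF finB d, folded Sb_def]
  define T where "T = (\<lambda>i j. (if i = j then 1 else 0) -
      (if i \<in> A \<and> j \<in> B then \<Sum>l\<in>B. M i l * Sb l j else (0::real)))"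
  define TM where "TM = (\<lambda>i j. \<Sum>k\<in>S. T i k * M k j)"
  have TMA: "TM i j = M i j - (\<Sum>l\<in>B. \<Sum>k\<in>B. M i l * Sb l k * M k j)" if i: "i \<in> A" for i j
  proof -
    have iS: "i \<in> S" using i AB by auto
    have "TM i j = (\<Sum>k\<in>S. (if i = k then 1 else 0) * M k j
                 - (if k \<in> B then (\<Sum>l\<in>B. M i l * Sb l k) * M k j else 0))"
      unfolding TM_def T_def using i by (intro sum.cong refl) (auto simp: algebra_simps)
    also have "\<dots> = M i j - (\<Sum>k\<in>S. if k \<in> B then (\<Sum>l\<in>B. M i l * Sb l k) * M k j else 0)"
      by (simp add: sum_subtractf delta_l[OF fin iS])
    also have "(\<Sum>k\<in>S. if k \<in> B then (\<Sum>l\<in>B. M i l * Sb l k) * M k j else 0)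
             = (\<Sum>k\<in>B. (\<Sum>l\<in>B. M i l * Sb l k) * M k j)"
    proof -
      have "S \<inter> B = B" using AB by auto
      thus ?thesis using sum.inter_restrict[OF fin, of "\<lambda>k. (\<Sum>l\<in>B. M i l * Sb l k) * M k j" B] by simp
    qed
    also have "\<dots> = (\<Sum>k\<in>B. \<Sum>l\<in>B. M i l * Sb l k * M k j)"
      by (simp add: sum_distrib_right)
    also have "\<dots> = (\<Sum>l\<in>B. \<Sum>k\<in>B. M i l * Sb l k * M k j)"
      by (rule sum.swap)
    finally show ?thesis .
  qed
  have TMB: "TM i j = M i j" if i: "i \<in> B" for i j
  proof -
    have iS: "i \<in> S" using i AB by auto
    have iA: "i \<notin> A" using i AB by auto
    have "TM i j = (\<Sum>k\<in>S. (if i = k then 1 else 0) * M k j)"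
      unfolding TM_def T_def using iA by (intro sum.cong refl) auto
    thus ?thesis by (simp add: delta_l[OF fin iS])
  qed
  have TMAB: "TM a b = 0" if a: "a \<in> A" and b: "b \<in> B" for a b
  proof -
    have "(\<Sum>l\<in>B. \<Sum>k\<in>B. M a l * Sb l k * M k b) = (\<Sum>l\<in>B. M a l * (\<Sum>k\<in>B. Sb l k * M k b))"
      by (simp add: sum_distrib_left mult.assoc)
    also have "\<dots> = (\<Sum>l\<in>B. M a l * (if l = b then 1 else 0))"
      using Sp(2) b by (intro sum.cong refl) auto
    also have "\<dots> = M a b" by (rule delta_r[OF finB b])
    finally show ?thesis using TMA[OF a] by simp
  qed
  have dT: "det_on S T = 1"
  proof -
    have "det_on S T = det_on B T * det_on A T"
      by (rule det_on_block[OF fin]) (use AB in \<open>auto simp: T_def\<close>)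
    also have "det_on B T = det_on B (\<lambda>i j. if i = j then 1 else 0)"
      by (rule det_on_cong) (use AB in \<open>auto simp: T_def\<close>)
    also have "det_on A T = det_on A (\<lambda>i j. if i = j then 1 else 0)"
      by (rule det_on_cong) (use AB in \<open>auto simp: T_def\<close>)
    finally show ?thesis by (simp add: det_on_id finA finB)
  qed
  have "det_on S TM = det_on S M"
    unfolding TM_def det_on_mult[OF fin] dT by simp
  moreover have "det_on S TM = det_on A TM * det_on B TM"
    by (rule det_on_block[OF fin AB]) (rule TMAB)
  moreover have "det_on A TM = det_on A (partial_cov M B)"
    by (rule det_on_cong) (simp add: TMA partial_cov_def Sb_def)
  moreover have "det_on B TM = det_on B M"
    by (rule det_on_cong) (simp add: TMB)
  ultimately show ?thesis by (simp add: mult.commute)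
qed



lemma sum4_swap:
  "(\<Sum>a\<in>A. \<Sum>a'\<in>A. \<Sum>k\<in>B. \<Sum>l\<in>B. (f a a' k l :: real)) = (\<Sum>k\<in>B. \<Sum>l\<in>B. \<Sum>a\<in>A. \<Sum>a'\<in>A. f a a' k l)"
proof -
  have "(\<Sum>a\<in>A. \<Sum>a'\<in>A. \<Sum>k\<in>B. \<Sum>l\<in>B. f a a' k l) = (\<Sum>a\<in>A. \<Sum>k\<in>B. \<Sum>a'\<in>A. \<Sum>l\<in>B. f a a' k l)"
    by (intro sum.cong refl sum.swap)
  also have "\<dots> = (\<Sum>a\<in>A. \<Sum>k\<in>B. \<Sum>l\<in>B. \<Sum>a'\<in>A. f a a' k l)"
    by (intro sum.cong refl sum.swap)
  also have "\<dots> = (\<Sum>k\<in>B. \<Sum>a\<in>A. \<Sum>l\<in>B. \<Sum>a'\<in>A. f a a' k l)"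
    by (rule sum.swap)
  also have "\<dots> = (\<Sum>k\<in>B. \<Sum>l\<in>B. \<Sum>a\<in>A. \<Sum>a'\<in>A. f a a' k l)"
    by (intro sum.cong refl sum.swap)
  finally show ?thesis .
qed

lemma quad_schur:
  fixes z :: "nat \<Rightarrow> real" and M Sb :: "nat \<Rightarrow> nat \<Rightarrow> real"
  assumes fin: "finite S" and AB: "A \<union> B = S" "A \<inter> B = {}"
    and sym: "\<forall>i\<in>S. \<forall>j\<in>S. M i j = M j i"
    and Sp: "\<forall>i\<in>B. \<forall>j\<in>B. (\<Sum>k\<in>B. M i k * Sb k j) = (if i = j then 1 else 0)"
  defines "u \<equiv> (\<lambda>c. \<Sum>a\<in>A. M c a * z a)"
  defines "w \<equiv> (\<lambda>i. if i \<in> A then z i else if i \<in> B then - (\<Sum>c\<in>B. Sb i c * u c) else 0)"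
  shows "(\<Sum>i\<in>S. \<Sum>j\<in>S. w i * M i j * w j) =
         (\<Sum>i\<in>A. \<Sum>j\<in>A. z i * (M i j - (\<Sum>k\<in>B. \<Sum>l\<in>B. M i k * Sb k l * M l j)) * z j)"
proof -
  have finA: "finite A" and finB: "finite B" using fin AB by auto
  define v where "v = (\<lambda>b. - (\<Sum>c\<in>B. Sb b c * u c))"
  have wA: "w a = z a" if "a \<in> A" for a using that by (simp add: w_def)
  have wB: "w b = v b" if "b \<in> B" for b using that AB by (auto simp: w_def v_def)
  have split: "(\<Sum>i\<in>S. \<Sum>j\<in>S. w i * M i j * w j) =
      (\<Sum>i\<in>A. \<Sum>j\<in>A. w i * M i j * w j) + (\<Sum>i\<in>A. \<Sum>j\<in>B. w i * M i j * w j) +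
      (\<Sum>i\<in>B. \<Sum>j\<in>A. w i * M i j * w j) + (\<Sum>i\<in>B. \<Sum>j\<in>B. w i * M i j * w j)"
    unfolding AB(1)[symmetric] sum.union_disjoint[OF finA finB AB(2)] sum.distrib by simp
  have AA: "(\<Sum>i\<in>A. \<Sum>j\<in>A. w i * M i j * w j) = (\<Sum>i\<in>A. \<Sum>j\<in>A. z i * M i j * z j)"
    using wA by simp
  have uB: "(\<Sum>a\<in>A. z a * M a b) = u b" if "b \<in> B" for b
    unfolding u_def using that AB sym by (intro sum.cong refl) (auto simp: mult.commute)
  have ABs: "(\<Sum>i\<in>A. \<Sum>j\<in>B. w i * M i j * w j) = (\<Sum>b\<in>B. u b * v b)"
  proof -
    have "(\<Sum>i\<in>A. \<Sum>j\<in>B. w i * M i j * w j) = (\<Sum>i\<in>A. \<Sum>j\<in>B. z i * M i j * v j)"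
      using wA wB by simp
    also have "\<dots> = (\<Sum>j\<in>B. \<Sum>i\<in>A. z i * M i j * v j)" by (rule sum.swap)
    also have "\<dots> = (\<Sum>j\<in>B. (\<Sum>i\<in>A. z i * M i j) * v j)" by (simp add: sum_distrib_right)
    also have "\<dots> = (\<Sum>b\<in>B. u b * v b)" using uB by simp
    finally show ?thesis .
  qed
  have BAs: "(\<Sum>i\<in>B. \<Sum>j\<in>A. w i * M i j * w j) = (\<Sum>b\<in>B. u b * v b)"
  proof -
    have "(\<Sum>i\<in>B. \<Sum>j\<in>A. w i * M i j * w j) = (\<Sum>i\<in>B. v i * (\<Sum>j\<in>A. M i j * z j))"
      using wA wB by (simp add: sum_distrib_left mult.assoc)
    also have "\<dots> = (\<Sum>b\<in>B. u b * v b)" by (simp add: u_def mult.commute)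
    finally show ?thesis .
  qed
  have Mv: "(\<Sum>j\<in>B. M i j * v j) = - u i" if i: "i \<in> B" for i
  proof -
    have "(\<Sum>j\<in>B. M i j * v j) = - (\<Sum>j\<in>B. \<Sum>c\<in>B. M i j * Sb j c * u c)"
      by (simp add: v_def sum_distrib_left sum_negf mult.assoc)
    also have "(\<Sum>j\<in>B. \<Sum>c\<in>B. M i j * Sb j c * u c) = (\<Sum>c\<in>B. (\<Sum>j\<in>B. M i j * Sb j c) * u c)"
      by (subst sum.swap) (simp add: sum_distrib_right)
    also have "\<dots> = (\<Sum>c\<in>B. (if i = c then 1 else 0) * u c)"
      using Sp i by (intro sum.cong refl) auto
    also have "\<dots> = u i" by (rule delta_l[OF finB i])
    finally show ?thesis .
  qed
  have BB: "(\<Sum>i\<in>B. \<Sum>j\<in>B. w i * M i j * w j) = - (\<Sum>b\<in>B. u b * v b)"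
  proof -
    have "(\<Sum>i\<in>B. \<Sum>j\<in>B. w i * M i j * w j) = (\<Sum>i\<in>B. v i * (\<Sum>j\<in>B. M i j * v j))"
      using wB by (simp add: sum_distrib_left mult.assoc)
    also have "\<dots> = (\<Sum>i\<in>B. - (v i * u i))" using Mv by simp
    finally show ?thesis by (simp add: sum_negf mult.commute)
  qed
  have uv: "(\<Sum>b\<in>B. u b * v b) = - (\<Sum>k\<in>B. \<Sum>l\<in>B. u k * Sb k l * u l)"
    by (simp add: v_def sum_distrib_left sum_negf mult.assoc)
  have R: "(\<Sum>i\<in>A. \<Sum>j\<in>A. z i * (M i j - (\<Sum>k\<in>B. \<Sum>l\<in>B. M i k * Sb k l * M l j)) * z j)
     = (\<Sum>i\<in>A. \<Sum>j\<in>A. z i * M i j * z j) - (\<Sum>i\<in>A. \<Sum>j\<in>A. \<Sum>k\<in>B. \<Sum>l\<in>B. z i * M i k * Sb k l * M l j * z j)"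
    by (simp add: algebra_simps sum_subtractf sum_distrib_left sum_distrib_right)
  have R2: "(\<Sum>i\<in>A. \<Sum>j\<in>A. \<Sum>k\<in>B. \<Sum>l\<in>B. z i * M i k * Sb k l * M l j * z j)
     = (\<Sum>k\<in>B. \<Sum>l\<in>B. u k * Sb k l * u l)"
  proof -
    have "(\<Sum>i\<in>A. \<Sum>j\<in>A. \<Sum>k\<in>B. \<Sum>l\<in>B. z i * M i k * Sb k l * M l j * z j)
       = (\<Sum>k\<in>B. \<Sum>l\<in>B. \<Sum>i\<in>A. \<Sum>j\<in>A. z i * M i k * Sb k l * M l j * z j)"
      by (rule sum4_swap)
    also have "\<dots> = (\<Sum>k\<in>B. \<Sum>l\<in>B. (\<Sum>i\<in>A. z i * M i k) * Sb k l * (\<Sum>j\<in>A. M l j * z j))"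
      by (intro sum.cong refl) (simp add: sum_distrib_left sum_distrib_right mult_ac)
    also have "\<dots> = (\<Sum>k\<in>B. \<Sum>l\<in>B. u k * Sb k l * u l)"
      using uB by (simp add: u_def mult.commute)
    finally show ?thesis .
  qed
  show ?thesis
    using split AA ABs BAs BB uv R R2 by simp
qed



lemma det_on_sing: "det_on {s} M = M s s"
  unfolding det_on_def by simp

lemma det_on_two:
  assumes xy: "x \<noteq> y"
  shows "det_on {x, y} M = M x x * M y y - M x y * M y x"
proof -
  have P: "{\<sigma>. \<sigma> permutes {x,y}} = {id, Transposition.transpose x y}"
    apply (auto simp: permutes_insert)
     apply (rule image_eqI[where x="(x,id)"]; simp)
    apply (rule image_eqI[where x="(y,id)"]; simp)
    done
  have ne: "id \<noteq> Transposition.transpose x y"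
    using xy by (metis id_apply transpose_apply_first)
  show ?thesis
    unfolding det_on_def P using xy ne
    by (simp add: sign_swap_id)
qed


lemma pd_subset:
  assumes pd: "pos_def_on S M" and TS: "T \<subseteq> S" and fin: "finite S"
  shows "pos_def_on T M"
  unfolding pos_def_on_def
proof (intro conjI allI impI)
  show "\<forall>i\<in>T. \<forall>j\<in>T. M i j = M j i" using pd TS unfolding pos_def_on_def by blast
next
  fix z :: "nat \<Rightarrow> real" assume ex: "\<exists>i\<in>T. z i \<noteq> 0"
  define z' where "z' = (\<lambda>i. if i \<in> T then z i else 0)"
  have ex': "\<exists>i\<in>S. z' i \<noteq> 0" using ex TS by (auto simp: z'_def)
  have pos: "(\<Sum>i\<in>S. \<Sum>j\<in>S. z' i * M i j * z' j) > 0"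
    using pd ex' unfolding pos_def_on_def by blast
  have "(\<Sum>i\<in>S. \<Sum>j\<in>S. z' i * M i j * z' j) = (\<Sum>i\<in>S. \<Sum>j\<in>T. z' i * M i j * z' j)"
    by (intro sum.cong refl sum.mono_neutral_right fin TS) (auto simp: z'_def)
  also have "\<dots> = (\<Sum>i\<in>T. \<Sum>j\<in>T. z' i * M i j * z' j)"
    by (intro sum.mono_neutral_right fin TS) (auto simp: z'_def)
  also have "\<dots> = (\<Sum>i\<in>T. \<Sum>j\<in>T. z i * M i j * z j)"
    by (intro sum.cong refl) (auto simp: z'_def)
  finally show "(\<Sum>i\<in>T. \<Sum>j\<in>T. z i * M i j * z j) > 0" using pos by simp
qed

lemma pd_schur_pos:
  assumes fin: "finite S" and AB: "A \<union> B = S" "A \<inter> B = {}" and pd: "pos_def_on S M"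
    and dB: "det_on B M \<noteq> 0" and ex: "\<exists>i\<in>A. z i \<noteq> 0"
  shows "(\<Sum>i\<in>A. \<Sum>j\<in>A. z i * partial_cov M B i j * z j) > 0"
proof -
  have finB: "finite B" using fin AB by auto
  have sym: "\<forall>i\<in>S. \<forall>j\<in>S. M i j = M j i" using pd unfolding pos_def_on_def by blast
  note Sp = inv_on_props(1)[OF finB dB]
  note q = quad_schur[OF fin AB sym Sp, of z]
  define w where "w = (\<lambda>i. if i \<in> A then z i else if i \<in> B then - (\<Sum>c\<in>B. inv_on B M i c * (\<Sum>a\<in>A. M c a * z a)) else 0)"
  have "\<exists>i\<in>S. w i \<noteq> 0" using ex AB by (auto simp: w_def)
  hence "(\<Sum>i\<in>S. \<Sum>j\<in>S. w i * M i j * w j) > 0" using pd unfolding pos_def_on_def by blast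
  thus ?thesis using q unfolding partial_cov_def w_def by simp
qed

lemma pd_det_pos:
  assumes fin: "finite S" and pd: "pos_def_on S M"
  shows "det_on S M > 0"
  using fin pd
proof (induction S rule: finite_induct)
  case empty
  show ?case by (simp add: det_on_def)
next
  case (insert s F)
  have pdF: "pos_def_on F M" using pd_subset[OF insert.prems] insert.hyps by auto
  have dF: "det_on F M > 0" using insert.IH[OF pdF] .
  have AB: "{s} \<union> F = insert s F" "{s} \<inter> F = {}" using insert.hyps by auto
  have "det_on (insert s F) M = det_on F M * det_on {s} (partial_cov M F)"
    by (rule schur[OF _ AB]) (use insert.hyps dF in auto)
  also have "det_on {s} (partial_cov M F) = partial_cov M F s s" by (rule det_on_sing)
  finally have e: "det_on (insert s F) M = det_on F M * partial_cov M F s s" .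
  have "partial_cov M F s s > 0"
    using pd_schur_pos[OF _ AB insert.prems, of "\<lambda>i. if i = s then 1 else 0"] insert.hyps dF
    by simp
  thus ?case using dF e by simp
qed

lemma inv_sym:
  assumes fin: "finite B" and sym: "\<forall>i\<in>B. \<forall>j\<in>B. M i j = M j i" and d: "det_on B M \<noteq> 0"
    and ij: "i \<in> B" "j \<in> B"
  shows "inv_on B M i j = inv_on B M j i"
proof -
  define Sb where "Sb = inv_on B M"
  note R = inv_on_props(1)[OF fin d, folded Sb_def]
  note L = inv_on_props(2)[OF fin d, folded Sb_def]
  have "(\<Sum>k\<in>B. \<Sum>l\<in>B. Sb i k * M k l * Sb j l) = (\<Sum>k\<in>B. Sb i k * (\<Sum>l\<in>B. Sb j l * M l k))"
    using sym by (intro sum.cong refl) (auto simp: sum_distrib_left mult_ac intro!: sum.cong)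
  also have "\<dots> = (\<Sum>k\<in>B. Sb i k * (if k = j then 1 else 0))"
    using L ij by (intro sum.cong refl) auto
  also have "\<dots> = Sb i j" by (rule delta_r[OF fin ij(2)])
  finally have 1: "(\<Sum>k\<in>B. \<Sum>l\<in>B. Sb i k * M k l * Sb j l) = Sb i j" .
  have "(\<Sum>k\<in>B. \<Sum>l\<in>B. Sb i k * M k l * Sb j l) = (\<Sum>l\<in>B. \<Sum>k\<in>B. Sb i k * M k l * Sb j l)"
    by (rule sum.swap)
  also have "\<dots> = (\<Sum>l\<in>B. (\<Sum>k\<in>B. Sb i k * M k l) * Sb j l)"
    by (simp add: sum_distrib_right)
  also have "\<dots> = (\<Sum>l\<in>B. (if i = l then 1 else 0) * Sb j l)"
    using L ij by (intro sum.cong refl) auto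
  also have "\<dots> = Sb j i" by (rule delta_l[OF fin ij(1)])
  finally show ?thesis using 1 by (simp add: Sb_def)
qed



lemma ineq2:
  fixes a b c d e f :: real
  assumes a: "a > 0" and c: "c > 0" and P: "a * c - b * b > 0"
    and Q: "\<And>z1 z2. z1 * d * z1 + z1 * e * z2 + z2 * e * z1 + z2 * f * z2 \<ge> 0"
  shows "a * c - b * b \<le> (a + d) * (c + f) - (b + e) * (b + e)"
proof -
  have d: "d \<ge> 0" using Q[of 1 0] by simp
  have f: "f \<ge> 0" using Q[of 0 1] by simp
  have q1: "d * c * c - 2 * e * b * c + f * b * b \<ge> 0" using Q[of c "-b"] by (simp add: algebra_simps)
  have q2: "d * (d * f - e * e) \<ge> 0" using Q[of e "-d"] by (simp add: algebra_simps)
  have q3: "f * (d * f - e * e) \<ge> 0" using Q[of f "-e"] by (simp add: algebra_simps)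
  have q4: "d - 2 * e * e + f * e * e \<ge> 0" using Q[of 1 "-e"] by (simp add: algebra_simps)
  have de: "d * f - e * e \<ge> 0"
  proof (cases "d > 0")
    case True thus ?thesis using q2 by (simp add: zero_le_mult_iff)
  next
    case False
    hence d0: "d = 0" using d by simp
    show ?thesis
    proof (cases "f > 0")
      case True thus ?thesis using q3 by (simp add: zero_le_mult_iff)
    next
      case False
      hence "f = 0" using f by simp
      hence "e * e \<le> 0" using q4 d0 by simp
      hence "e = 0" by (auto simp: mult_le_0_iff)
      thus ?thesis using d0 by simp
    qed
  qed
  have "c * (a * f + c * d - 2 * b * e) = f * (a * c - b * b) + (d * c * c - 2 * e * b * c + f * b * b)"
    by (simp add: algebra_simps)
  also have "\<dots> \<ge> 0" using f P q1 by simp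
  finally have "a * f + c * d - 2 * b * e \<ge> 0" using c by (simp add: zero_le_mult_iff)
  thus ?thesis using de by (simp add: algebra_simps)
qed

lemma pd_Q_nonneg:
  assumes fin: "finite S" and AB: "A \<union> B = S" "A \<inter> B = {}" and pd: "pos_def_on S M"
    and dB: "det_on B M \<noteq> 0"
  shows "(\<Sum>i\<in>A. \<Sum>j\<in>A. z i * (\<Sum>k\<in>B. \<Sum>l\<in>B. M i k * inv_on B M k l * M l j) * z j) \<ge> 0"
proof -
  have finB: "finite B" using fin AB by auto
  have sym: "\<forall>i\<in>S. \<forall>j\<in>S. M i j = M j i" using pd unfolding pos_def_on_def by blast
  have pdB: "pos_def_on B M" using pd_subset[OF pd _ fin] AB by auto
  define Sb where "Sb = inv_on B M"
  note Sp = inv_on_props(1)[OF finB dB, folded Sb_def]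
  define u where "u = (\<lambda>k. \<Sum>a\<in>A. M k a * z a)"
  define v where "v = (\<lambda>l. \<Sum>m\<in>B. Sb l m * u m)"
  have uB: "(\<Sum>i\<in>A. z i * M i k) = u k" if "k \<in> B" for k
    unfolding u_def using that AB sym by (intro sum.cong refl) (auto simp: mult.commute)
  have "(\<Sum>i\<in>A. \<Sum>j\<in>A. z i * (\<Sum>k\<in>B. \<Sum>l\<in>B. M i k * Sb k l * M l j) * z j)
      = (\<Sum>i\<in>A. \<Sum>j\<in>A. \<Sum>k\<in>B. \<Sum>l\<in>B. z i * M i k * Sb k l * M l j * z j)"
    by (simp add: sum_distrib_left sum_distrib_right mult_ac)
  also have "\<dots> = (\<Sum>k\<in>B. \<Sum>l\<in>B. \<Sum>i\<in>A. \<Sum>j\<in>A. z i * M i k * Sb k l * M l j * z j)"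
    by (rule sum4_swap)
  also have "\<dots> = (\<Sum>k\<in>B. \<Sum>l\<in>B. (\<Sum>i\<in>A. z i * M i k) * Sb k l * (\<Sum>j\<in>A. M l j * z j))"
    by (intro sum.cong refl) (simp add: sum_distrib_left sum_distrib_right mult_ac)
  also have "\<dots> = (\<Sum>k\<in>B. \<Sum>l\<in>B. u k * Sb k l * u l)"
    using uB by (simp add: u_def mult.commute)
  also have "\<dots> = (\<Sum>k\<in>B. u k * v k)"
    by (simp add: v_def sum_distrib_left mult.assoc)
  also have "\<dots> = (\<Sum>k\<in>B. (\<Sum>l\<in>B. M k l * v l) * v k)"
  proof (intro sum.cong refl)
    fix k assume k: "k \<in> B"
    have "(\<Sum>l\<in>B. M k l * v l) = (\<Sum>l\<in>B. \<Sum>m\<in>B. M k l * Sb l m * u m)"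
      by (simp add: v_def sum_distrib_left mult.assoc)
    also have "\<dots> = (\<Sum>m\<in>B. (\<Sum>l\<in>B. M k l * Sb l m) * u m)"
      by (subst sum.swap) (simp add: sum_distrib_right)
    also have "\<dots> = (\<Sum>m\<in>B. (if k = m then 1 else 0) * u m)"
      using Sp k by (intro sum.cong refl) auto
    also have "\<dots> = u k" by (rule delta_l[OF finB k])
    finally show "u k * v k = (\<Sum>l\<in>B. M k l * v l) * v k" by simp
  qed
  also have "\<dots> = (\<Sum>k\<in>B. \<Sum>l\<in>B. v k * M k l * v l)"
    by (intro sum.cong refl) (simp add: sum_distrib_left sum_distrib_right mult_ac)
  finally have eq: "(\<Sum>i\<in>A. \<Sum>j\<in>A. z i * (\<Sum>k\<in>B. \<Sum>l\<in>B. M i k * Sb k l * M l j) * z j)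
      = (\<Sum>k\<in>B. \<Sum>l\<in>B. v k * M k l * v l)" .
  have "(\<Sum>k\<in>B. \<Sum>l\<in>B. v k * M k l * v l) \<ge> 0"
  proof (cases "\<exists>k\<in>B. v k \<noteq> 0")
    case True thus ?thesis using pdB unfolding pos_def_on_def by (simp add: less_imp_le)
  next
    case False thus ?thesis by simp
  qed
  thus ?thesis using eq by (simp add: Sb_def)
qed

lemma KP:
  fixes K M Sb :: "nat \<Rightarrow> nat \<Rightarrow> real"
  assumes fin: "finite V" and AB: "A \<union> B = V" "A \<inter> B = {}"
    and LK: "\<forall>i\<in>V. \<forall>j\<in>V. (\<Sum>k\<in>V. K i k * M k j) = (if i = j then 1 else 0)"
    and Sp: "\<forall>i\<in>B. \<forall>j\<in>B. (\<Sum>k\<in>B. M i k * Sb k j) = (if i = j then 1 else 0)"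
    and ij: "i \<in> A" "j \<in> A"
  shows "(\<Sum>k\<in>A. K i k * (M k j - (\<Sum>l\<in>B. \<Sum>m\<in>B. M k l * Sb l m * M m j))) = (if i = j then 1 else 0)"
proof -
  have finA: "finite A" and finB: "finite B" using fin AB by auto
  have spl: "(\<Sum>k\<in>V. g k) = (\<Sum>k\<in>A. g k) + (\<Sum>k\<in>B. g k)" for g :: "nat \<Rightarrow> real"
    using sum.union_disjoint[OF finA finB AB(2)] AB(1) by simp
  have iV: "i \<in> V" "j \<in> V" using ij AB by auto
  define t where "t = (\<lambda>l. \<Sum>m\<in>B. Sb l m * M m j)"
  have c: "(\<Sum>k\<in>A. K i k * M k l) = - (\<Sum>k\<in>B. K i k * M k l)" if l: "l \<in> B" for l
  proof -
    have "l \<in> V" "i \<noteq> l" using l ij AB by auto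
    hence "(\<Sum>k\<in>V. K i k * M k l) = 0" using LK iV by simp
    thus ?thesis using spl[of "\<lambda>k. K i k * M k l"] by simp
  qed
  have Mt: "(\<Sum>l\<in>B. M k l * t l) = M k j" if k: "k \<in> B" for k
  proof -
    have "(\<Sum>l\<in>B. M k l * t l) = (\<Sum>l\<in>B. \<Sum>m\<in>B. M k l * Sb l m * M m j)"
      by (simp add: t_def sum_distrib_left mult.assoc)
    also have "\<dots> = (\<Sum>m\<in>B. (\<Sum>l\<in>B. M k l * Sb l m) * M m j)"
      by (subst sum.swap) (simp add: sum_distrib_right)
    also have "\<dots> = (\<Sum>m\<in>B. (if k = m then 1 else 0) * M m j)"
      using Sp k by (intro sum.cong refl) auto
    also have "\<dots> = M k j" by (rule delta_l[OF finB k])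
    finally show ?thesis .
  qed
  have "(\<Sum>k\<in>A. K i k * (\<Sum>l\<in>B. \<Sum>m\<in>B. M k l * Sb l m * M m j))
      = (\<Sum>k\<in>A. \<Sum>l\<in>B. K i k * M k l * t l)"
    by (simp add: t_def sum_distrib_left mult_ac)
  also have "\<dots> = (\<Sum>l\<in>B. (\<Sum>k\<in>A. K i k * M k l) * t l)"
    by (subst sum.swap) (simp add: sum_distrib_right)
  also have "\<dots> = (\<Sum>l\<in>B. - (\<Sum>k\<in>B. K i k * M k l) * t l)"
    using c by simp
  also have "\<dots> = - (\<Sum>l\<in>B. \<Sum>k\<in>B. K i k * M k l * t l)"
    by (simp add: sum_negf sum_distrib_right)
  also have "\<dots> = - (\<Sum>k\<in>B. \<Sum>l\<in>B. K i k * M k l * t l)"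
    by (subst sum.swap) simp
  also have "\<dots> = - (\<Sum>k\<in>B. K i k * (\<Sum>l\<in>B. M k l * t l))"
    by (simp add: sum_distrib_left mult.assoc)
  also have "\<dots> = - (\<Sum>k\<in>B. K i k * M k j)"
    using Mt by simp
  finally have 2: "(\<Sum>k\<in>A. K i k * (\<Sum>l\<in>B. \<Sum>m\<in>B. M k l * Sb l m * M m j)) = - (\<Sum>k\<in>B. K i k * M k j)" .
  have 1: "(\<Sum>k\<in>A. K i k * M k j) = (if i = j then 1 else 0) - (\<Sum>k\<in>B. K i k * M k j)"
    using spl[of "\<lambda>k. K i k * M k j"] LK iV by simp
  show ?thesis using 1 2 by (simp add: right_diff_distrib sum_subtractf)
qed



theorem theorem2:
  fixes p :: nat and \<Sigma> :: "nat \<Rightarrow> nat \<Rightarrow> real" and E :: "nat set set" and x y :: nat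
  defines "V \<equiv> {1..p}"
  assumes pd: "pos_def_on V \<Sigma>"
    and graph: "E \<subseteq> {{u, v} | u v. u \<in> V \<and> v \<in> V \<and> u \<noteq> v}"
    and implies: "\<forall>u\<in>V. \<forall>v\<in>V. u \<noteq> v \<and> inv_on V \<Sigma> u v \<noteq> 0 \<longrightarrow> {u, v} \<in> E"
    and edge: "{x, y} \<in> E"
  shows "path_weight V [x, y] \<Sigma> =
           partial_cov \<Sigma> (V - {x, y}) x y / (1 - (vec_corr \<Sigma> {x, y} (V - {x, y}))\<^sup>2)"
proof -
  obtain u v where uv: "{x,y} = {u,v}" "u \<in> V" "v \<in> V" "u \<noteq> v" using graph edge by blast
  have xy: "x \<noteq> y" using uv by (auto simp: doubleton_eq_iff)
  have xV: "x \<in> V" "y \<in> V" using uv by (auto simp: doubleton_eq_iff)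
  have finV: "finite V" unfolding V_def by simp
  define A where "A = {x,y}"
  define B where "B = V - {x,y}"
  have AB: "A \<union> B = V" "A \<inter> B = {}" using xV by (auto simp: A_def B_def)
  have finB: "finite B" using finV by (simp add: B_def)
  have finA: "finite A" by (simp add: A_def)
  have sym: "\<forall>i\<in>V. \<forall>j\<in>V. \<Sigma> i j = \<Sigma> j i" using pd unfolding pos_def_on_def by blast
  have symxy: "\<Sigma> y x = \<Sigma> x y" using sym xV by auto
  have dV: "det_on V \<Sigma> > 0" by (rule pd_det_pos[OF finV pd])
  have pdB: "pos_def_on B \<Sigma>" using pd_subset[OF pd _ finV] by (auto simp: B_def)
  have dB: "det_on B \<Sigma> > 0" using pd_det_pos[OF finB pdB] .
  have pdA: "pos_def_on A \<Sigma>" using pd_subset[OF pd _ finV] xV by (auto simp: A_def)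
  have dA: "det_on A \<Sigma> > 0" using pd_det_pos[OF finA pdA] .
  have dA2: "det_on A \<Sigma> = \<Sigma> x x * \<Sigma> y y - \<Sigma> x y * \<Sigma> x y"
    unfolding A_def det_on_two[OF xy] symxy ..
  define K where "K = inv_on V \<Sigma>"
  have LK: "\<forall>i\<in>V. \<forall>j\<in>V. (\<Sum>k\<in>V. K i k * \<Sigma> k j) = (if i = j then 1 else 0)"
    using inv_on_props(2)[OF finV, of \<Sigma>] dV by (simp add: K_def)
  define Sb where "Sb = inv_on B \<Sigma>"
  have Sp: "\<forall>i\<in>B. \<forall>j\<in>B. (\<Sum>k\<in>B. \<Sigma> i k * Sb k j) = (if i = j then 1 else 0)"
    using inv_on_props(1)[OF finB, of \<Sigma>] dB by (simp add: Sb_def)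
  define P where "P = partial_cov \<Sigma> B"
  have Pdef: "P i j = \<Sigma> i j - (\<Sum>k\<in>B. \<Sum>l\<in>B. \<Sigma> i k * Sb k l * \<Sigma> l j)" for i j
    by (simp add: P_def partial_cov_def Sb_def)
  have KPij: "(\<Sum>k\<in>A. K i k * P k j) = (if i = j then 1 else 0)" if "i \<in> A" "j \<in> A" for i j
    unfolding Pdef by (rule KP[OF finV AB LK Sp that])
  have sA: "(\<Sum>k\<in>A. g k) = g x + g y" for g :: "nat \<Rightarrow> real"
    using xy by (simp add: A_def)
  have KP1: "K x x * P x x + K x y * P y x = 1" using KPij[of x x] sA by (simp add: A_def)
  have KP2: "K x x * P x y + K x y * P y y = 0" using KPij[of x y] sA xy by (simp add: A_def)
  have Psym: "P y x = P x y"
  proof -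
    have Sbs: "Sb k l = Sb l k" if "k \<in> B" "l \<in> B" for k l
      unfolding Sb_def by (rule inv_sym[OF finB _ _ that]) (use sym AB dB in auto)
    have "(\<Sum>k\<in>B. \<Sum>l\<in>B. \<Sigma> y k * Sb k l * \<Sigma> l x) = (\<Sum>l\<in>B. \<Sum>k\<in>B. \<Sigma> y k * Sb k l * \<Sigma> l x)"
      by (rule sum.swap)
    also have "\<dots> = (\<Sum>l\<in>B. \<Sum>k\<in>B. \<Sigma> x l * Sb l k * \<Sigma> k y)"
      using sym Sbs AB xV by (intro sum.cong refl) (auto simp: mult_ac)
    finally show ?thesis unfolding Pdef using symxy by simp
  qed
  define a where "a = P x x"
  define b where "b = P x y"
  define c where "c = P y y"
  have qP: "(\<Sum>i\<in>A. \<Sum>j\<in>A. z i * P i j * z j) = z x * a * z x + z x * b * z y + z y * b * z x + z y * c * z y"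
    for z :: "nat \<Rightarrow> real"
    using xy Psym by (simp add: A_def a_def b_def c_def)
  have Ppos: "z x * a * z x + z x * b * z y + z y * b * z x + z y * c * z y > 0"
    if "z x \<noteq> 0 \<or> z y \<noteq> 0" for z :: "nat \<Rightarrow> real"
  proof -
    have "(\<Sum>i\<in>A. \<Sum>j\<in>A. z i * P i j * z j) > 0"
      unfolding P_def by (rule pd_schur_pos[OF finV AB pd]) (use dB that in \<open>auto simp: A_def\<close>)
    thus ?thesis using qP by simp
  qed
  have a0: "a > 0" using Ppos[of "\<lambda>i. if i = x then 1 else 0"] xy by simp
  have c0: "c > 0" using Ppos[of "\<lambda>i. if i = y then 1 else 0"] xy by simp
  have "a * (a * c - b * b) > 0"
    using Ppos[of "\<lambda>i. if i = x then b else - a"] xy a0 by (simp add: algebra_simps)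
  hence dP: "a * c - b * b > 0" using a0 by (simp add: zero_less_mult_iff)
  have Qnn: "z1 * (\<Sigma> x x - a) * z1 + z1 * (\<Sigma> x y - b) * z2 + z2 * (\<Sigma> x y - b) * z1 + z2 * (\<Sigma> y y - c) * z2 \<ge> 0"
    for z1 z2 :: real
  proof -
    define z where "z = (\<lambda>i. if i = x then z1 else z2)"
    have "(\<Sum>i\<in>A. \<Sum>j\<in>A. z i * (\<Sum>k\<in>B. \<Sum>l\<in>B. \<Sigma> i k * inv_on B \<Sigma> k l * \<Sigma> l j) * z j) \<ge> 0"
      by (rule pd_Q_nonneg[OF finV AB pd]) (use dB in auto)
    moreover have "(\<Sum>k\<in>B. \<Sum>l\<in>B. \<Sigma> i k * inv_on B \<Sigma> k l * \<Sigma> l j) = \<Sigma> i j - P i j" for i j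
      using Pdef[of i j] by (simp add: Sb_def)
    ultimately show ?thesis using xy Psym symxy by (simp add: A_def z_def a_def b_def c_def)
  qed
  have ineq: "a * c - b * b \<le> det_on A \<Sigma>"
    using ineq2[OF a0 c0 dP, of "\<Sigma> x x - a" "\<Sigma> x y - b" "\<Sigma> y y - c"] Qnn dA2 by simp
  have schurV: "det_on V \<Sigma> = det_on B \<Sigma> * (a * c - b * b)"
    using schur[OF finV AB, of \<Sigma>] dB det_on_two[OF xy, of P] Psym
    by (simp add: A_def P_def[symmetric] a_def b_def c_def)
  have Kxy: "K x y * (a * c - b * b) = - b"
  proof -
    have e1: "K x x * a + K x y * b = 1" using KP1 Psym by (simp add: a_def b_def)
    have e2: "K x x * b + K x y * c = 0" using KP2 by (simp add: b_def c_def)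
    have "K x y * (a * c - b * b) = a * (K x x * b + K x y * c) - b * (K x x * a + K x y * b)"
      by (simp add: algebra_simps)
    thus ?thesis using e1 e2 by simp
  qed
  define lam where "lam = alienation \<Sigma> A B"
  have lam: "lam = (a * c - b * b) / det_on A \<Sigma>"
    unfolding lam_def alienation_def AB(1) schurV using dB by simp
  have vc: "1 - (vec_corr \<Sigma> A B)\<^sup>2 = lam"
  proof (cases "B = {}")
    case True
    hence "A = V" using AB by auto
    hence "lam = 1" using True dV unfolding lam_def alienation_def by (simp add: det_on_def)
    thus ?thesis using True by (simp add: vec_corr_def)
  next
    case False
    have "lam \<le> 1" using lam ineq dA by (simp add: divide_le_eq_1)
    thus ?thesis using False by (simp add: vec_corr_def A_def lam_def)
  qed
  have LHS: "path_weight V [x, y] \<Sigma> = - det_on A \<Sigma> * K x y"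
    using xy by (simp add: path_weight_def A_def K_def)
  have "partial_cov \<Sigma> (V - {x, y}) x y / (1 - (vec_corr \<Sigma> {x, y} (V - {x, y}))\<^sup>2) = b / lam"
    using vc by (simp add: A_def B_def P_def b_def)
  also have "\<dots> = - det_on A \<Sigma> * K x y"
  proof -
    have ne: "a * c - b * b \<noteq> 0" using dP by simp
    have k: "K x y = - b / (a * c - b * b)" using Kxy ne by (simp add: field_simps)
    show ?thesis unfolding lam k using dP dA by simp
  qed
  finally show ?thesis using LHS by simp
qed


end
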